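(* Let $d\ge 2$ and $2\le k\le d+1$, and let $y_1,\dots,y_N\in\{1,\dots,k\}$ be labels with every class appearing at least once. For prototypes $\boldsymbol w_1,\dots,\boldsymbol w_k\in\mathbb S^{d-1}$ and features $\boldsymbol z_1,\dots,\boldsymbol z_N\in\mathbb S^{d-1}$, define $$\gamma_{\min}=\min_{1\le i\le N}\Big(\boldsymbol w_{y_i}^{\mathrm T}\boldsymbol z_i-\max_{j\ne y_i}\boldsymbol w_j^{\mathrm T}\boldsymbol z_i\Big).$$ Then the maximum of $\gamma_{\min}$ over all such configurations is $\frac{k}{k-1}$, and it is attained if and only if $\boldsymbol w_i^{\mathrm T}\boldsymbol w_j=-\frac{1}{k-1}$ for all $i\ne j$ and $\boldsymbol z_i=\boldsymbol w_{y_i}$ for all $i$.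
   Context: $\mathbb S^{d-1}$ is the unit sphere in $\mathbb R^d$. Feature $\boldsymbol z_i$ is associated with label $y_i$; $\gamma_{\min}$ is the minimal sample margin over the dataset. *)

theory Defs
  imports "HOL-Analysis.Analysis"
begin

definition sample_margin :: "nat \<Rightarrow> (nat \<Rightarrow> real ^ 'n) \<Rightarrow> nat \<Rightarrow> real ^ 'n \<Rightarrow> real" where
  "sample_margin k w c zi = w c \<bullet> zi - Max {w j \<bullet> zi | j. j \<in> {1..k} \<and> j \<noteq> c}"

definition gamma_min :: "nat \<Rightarrow> nat \<Rightarrow> (nat \<Rightarrow> nat) \<Rightarrow> (nat \<Rightarrow> real ^ 'n) \<Rightarrow> (nat \<Rightarrow> real ^ 'n) \<Rightarrow> real" where
  "gamma_min k N y w z = Min {sample_margin k w (y i) (z i) | i. i < N}"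

definition admissible :: "nat \<Rightarrow> nat \<Rightarrow> (nat \<Rightarrow> real ^ 'n) \<Rightarrow> (nat \<Rightarrow> real ^ 'n) \<Rightarrow> bool" where
  "admissible k N w z \<longleftrightarrow> (\<forall>j\<in>{1..k}. norm (w j) = 1) \<and> (\<forall>i<N. norm (z i) = 1)"

end

theory Submission
  imports Defs
begin


lemma margin_set: "{w j \<bullet> zi | j. j \<in> {1..k} \<and> j \<noteq> c} = (\<lambda>j. w j \<bullet> zi) ` ({1..k} - {c})"
  by auto

lemma gamma_set: "{sample_margin k w (y i) (z i) | i. i < N} = (\<lambda>i. sample_margin k w (y i) (z i)) ` {..<N}"
  by auto

lemma ne_set: assumes "2 \<le> k" shows "{1..k} - {c::nat} \<noteq> {}"
proof -
  have "1 \<in> {1..k}" "2 \<in> {1..k}" using assms by auto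
  show ?thesis
  proof (cases "c = 1")
    case True then have "2 \<in> {1..k} - {c}" using assms by auto
    then show ?thesis by blast
  next
    case False then have "1 \<in> {1..k} - {c}" using assms by auto
    then show ?thesis by blast
  qed
qed

lemma margin_bound:
  fixes w :: "nat \<Rightarrow> real^'n" and z :: "real^'n"
  assumes k2: "2 \<le> k" and c: "c \<in> {1..k}"
  shows "(real k - 1) * sample_margin k w c z \<le> (real k *\<^sub>R w c - (\<Sum>j\<in>{1..k}. w j)) \<bullet> z"
proof -
  let ?A = "{1..k} - {c}"
  have fin: "finite ?A" by simp
  have ne: "?A \<noteq> {}" using ne_set k2 by blast
  let ?M = "Max ((\<lambda>j. w j \<bullet> z) ` ?A)"
  have each: "\<forall>j\<in>?A. w j \<bullet> z \<le> ?M" using fin by simp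
  have card: "card ?A = k - 1" using c by (simp add: card_Diff_singleton)
  have "(\<Sum>j\<in>?A. w j \<bullet> z) \<le> (\<Sum>j\<in>?A. ?M)" by (rule sum_mono) (use each in auto)
  also have "\<dots> = (real k - 1) * ?M" using card k2 by (simp add: of_nat_diff)
  finally have s: "(\<Sum>j\<in>?A. w j \<bullet> z) \<le> (real k - 1) * ?M" .
  have split: "(\<Sum>j\<in>{1..k}. w j) \<bullet> z = w c \<bullet> z + (\<Sum>j\<in>?A. w j \<bullet> z)"
    using c by (simp add: inner_sum_left sum.remove inner_add_left)
  have "(real k *\<^sub>R w c - (\<Sum>j\<in>{1..k}. w j)) \<bullet> z = real k * (w c \<bullet> z) - (\<Sum>j\<in>{1..k}. w j) \<bullet> z"
    by (simp add: inner_diff_left)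
  then show ?thesis using s split unfolding sample_margin_def margin_set
    by (simp add: algebra_simps)
qed

lemma gamma_le:
  assumes "i < N"
  shows "gamma_min k N y w z \<le> sample_margin k w (y i) (z i)"
  unfolding gamma_min_def gamma_set using assms by (intro Min_le) auto

lemma gamma_in:
  assumes "0 < N"
  shows "\<exists>i<N. gamma_min k N y w z = sample_margin k w (y i) (z i)"
proof -
  have "gamma_min k N y w z \<in> (\<lambda>i. sample_margin k w (y i) (z i)) ` {..<N}"
    unfolding gamma_min_def gamma_set using assms by (intro Min_in) auto
  then show ?thesis by auto
qed

lemma sumsq:
  fixes w :: "nat \<Rightarrow> real^'n"
  assumes "\<forall>j\<in>{1..k}. norm (w j) = 1"
  shows "(\<Sum>c\<in>{1..k}. (norm (real k *\<^sub>R w c - (\<Sum>j\<in>{1..k}. w j)))^2)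
       = real k ^ 3 - real k * (norm (\<Sum>j\<in>{1..k}. w j))^2"
proof -
  define S where "S = (\<Sum>j\<in>{1..k}. w j)"
  have e: "(norm (real k *\<^sub>R w c - S))^2 = real k ^ 2 - 2 * real k * (w c \<bullet> S) + (norm S)^2"
    if "c \<in> {1..k}" for c
  proof -
    have "(norm (real k *\<^sub>R w c - S))^2 = (real k *\<^sub>R w c - S) \<bullet> (real k *\<^sub>R w c - S)"
      by (simp add: power2_norm_eq_inner)
    also have "\<dots> = real k ^ 2 * (w c \<bullet> w c) - 2 * real k * (w c \<bullet> S) + S \<bullet> S"
      by (simp add: inner_diff_left inner_diff_right inner_commute power2_eq_square algebra_simps)
    also have "w c \<bullet> w c = 1" using assms that by (metis norm_eq_1)
    finally show ?thesis by (simp add: power2_norm_eq_inner)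
  qed
  have "(\<Sum>c\<in>{1..k}. (norm (real k *\<^sub>R w c - S))^2)
      = (\<Sum>c\<in>{1..k}. real k ^ 2 - 2 * real k * (w c \<bullet> S) + (norm S)^2)"
    using e by (rule sum.cong[OF refl])
  also have "\<dots> = real k * real k ^ 2 - 2 * real k * (S \<bullet> S) + real k * (norm S)^2"
    by (simp add: sum.distrib sum_subtractf sum_distrib_left[symmetric] inner_sum_left[symmetric] S_def)
  also have "\<dots> = real k ^ 3 - real k * (norm S)^2"
    by (simp add: power2_norm_eq_inner[symmetric] power2_eq_square power3_eq_cube algebra_simps)
  finally show ?thesis unfolding S_def .
qed

lemma key:
  fixes w z :: "nat \<Rightarrow> real^'n"
  assumes k2: "2 \<le> k"
    and allclasses: "\<forall>c\<in>{1..k}. \<exists>i<N. y i = c"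
    and adm: "admissible k N w z"
  shows "gamma_min k N y w z \<le> real k / (real k - 1) \<and>
         (gamma_min k N y w z \<ge> real k / (real k - 1) \<longrightarrow> (\<Sum>j\<in>{1..k}. w j) = 0)"
proof -
  define S where "S = (\<Sum>j\<in>{1..k}. w j)"
  define g where "g = gamma_min k N y w z"
  define a where "a c = norm (real k *\<^sub>R w c - S)" for c
  have wn: "\<forall>j\<in>{1..k}. norm (w j) = 1" and zn: "\<forall>i<N. norm (z i) = 1"
    using adm by (auto simp: admissible_def)
  have k1: "real k - 1 > 0" using k2 by simp
  have gle: "(real k - 1) * g \<le> a c" if c: "c \<in> {1..k}" for c
  proof -
    obtain i where i: "i < N" "y i = c" using allclasses c by blast
    have "(real k - 1) * g \<le> (real k - 1) * sample_margin k w c (z i)"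
      using gamma_le[OF i(1), of k y w z] i k1 unfolding g_def by simp
    also have "\<dots> \<le> (real k *\<^sub>R w c - S) \<bullet> z i"
      using margin_bound[OF k2 c] unfolding S_def by blast
    also have "\<dots> \<le> norm (real k *\<^sub>R w c - S) * norm (z i)" by (rule norm_cauchy_schwarz)
    finally show ?thesis using zn i unfolding a_def by simp
  qed
  define T where "T = (\<Sum>c\<in>{1..k}. a c)"
  have "(\<Sum>c\<in>{1..k}. (real k - 1) * g) \<le> T" unfolding T_def by (rule sum_mono) (use gle in auto)
  then have T1: "real k * ((real k - 1) * g) \<le> T" by simp
  have sq: "(\<Sum>c\<in>{1..k}. (a c)^2) = real k ^ 3 - real k * (norm S)^2"
    using sumsq[OF wn] unfolding a_def S_def by simp
  have cs: "T^2 \<le> real k * (\<Sum>c\<in>{1..k}. (a c)^2)"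
    unfolding T_def by (metis card_atLeastAtMost diff_Suc_1 mult.commute sum_squared_le_sum_of_squares)
  have T2: "T^2 \<le> real k ^ 4 - (real k)^2 * (norm S)^2"
  proof -
    have "T^2 \<le> real k * (real k ^ 3 - real k * (norm S)^2)" using cs sq by simp
    also have "\<dots> = real k ^ 4 - (real k)^2 * (norm S)^2"
      by (simp add: algebra_simps power2_eq_square power3_eq_cube power4_eq_xxxx)
    finally show ?thesis .
  qed
  have kpos: "real k > 0" using k2 by simp
  have part1: "g \<le> real k / (real k - 1)"
  proof (rule ccontr)
    assume "\<not> ?thesis"
    then have "(real k - 1) * g > real k" using k1 by (simp add: field_simps)
    then have "real k * ((real k - 1) * g) > real k * real k" using kpos by simp
    then have "T > (real k)^2" using T1 by (simp add: power2_eq_square)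
    then have "T^2 > ((real k)^2)^2" by (rule power_strict_mono) auto
    moreover have "((real k)^2)^2 = real k ^ 4" by (simp flip: power_mult)
    moreover have "0 \<le> (real k)^2 * (norm S)^2" by simp
    ultimately show False using T2 by linarith
  qed
  have part2: "S = 0" if ge: "g \<ge> real k / (real k - 1)"
  proof -
    have "(real k - 1) * g \<ge> real k" using ge k1 by (simp add: field_simps)
    then have "real k * ((real k - 1) * g) \<ge> real k * real k" using kpos by simp
    then have "T \<ge> (real k)^2" using T1 by (simp add: power2_eq_square)
    then have "T^2 \<ge> ((real k)^2)^2" by (rule power_mono) auto
    moreover have "((real k)^2)^2 = real k ^ 4" by (simp flip: power_mult)
    ultimately have "(real k)^2 * (norm S)^2 \<le> 0" using T2 by linarith
    then have "(norm S)^2 \<le> 0" using kpos by (simp add: mult_le_0_iff)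
    then show ?thesis by simp
  qed
  show ?thesis using part1 part2 unfolding g_def S_def by blast
qed

lemma unit_eq:
  fixes a b :: "real^'n"
  assumes "norm a = 1" "norm b = 1" "a \<bullet> b \<ge> 1"
  shows "a = b"
proof -
  have "(norm (a - b))^2 = a \<bullet> a - 2 * (a \<bullet> b) + b \<bullet> b"
    by (simp add: power2_norm_eq_inner inner_diff_left inner_diff_right inner_commute)
  moreover have "a \<bullet> a = 1" "b \<bullet> b = 1" using assms by (metis norm_eq_1)+
  ultimately have "(norm (a - b))^2 \<le> 0" using assms by simp
  then show ?thesis by simp
qed

lemma backward:
  fixes w z :: "nat \<Rightarrow> real^'n"
  assumes k2: "2 \<le> k" and N0: "0 < N"
    and labels: "\<forall>i<N. y i \<in> {1..k}"
    and adm: "admissible k N w z"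
    and simp: "\<forall>i\<in>{1..k}. \<forall>j\<in>{1..k}. i \<noteq> j \<longrightarrow> w i \<bullet> w j = - 1 / (real k - 1)"
    and zw: "\<forall>i<N. z i = w (y i)"
  shows "gamma_min k N y w z = real k / (real k - 1)"
proof -
  have wn: "\<forall>j\<in>{1..k}. norm (w j) = 1" using adm by (auto simp: admissible_def)
  have k1: "real k - 1 \<noteq> 0" using k2 by simp
  have m: "sample_margin k w (y i) (z i) = real k / (real k - 1)" if i: "i < N" for i
  proof -
    let ?c = "y i"
    have c: "?c \<in> {1..k}" using labels i by blast
    have "(\<lambda>j. w j \<bullet> z i) ` ({1..k} - {?c}) = (\<lambda>j. - 1 / (real k - 1)) ` ({1..k} - {?c})"
      using simp c zw i by (intro image_cong) auto
    also have "\<dots> = {- 1 / (real k - 1)}" using ne_set[OF k2, of ?c] by blast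
    finally have mx: "Max ((\<lambda>j. w j \<bullet> z i) ` ({1..k} - {?c})) = - 1 / (real k - 1)" by simp
    have "w ?c \<bullet> z i = 1" using zw i wn c by (metis norm_eq_1)
    then show ?thesis unfolding sample_margin_def margin_set mx using k1
      by (simp add: field_simps)
  qed
  have "(\<lambda>i. sample_margin k w (y i) (z i)) ` {..<N} = (\<lambda>i. real k / (real k - 1)) ` {..<N}"
    using m by (intro image_cong) auto
  also have "\<dots> = {real k / (real k - 1)}" using N0 by auto
  finally show ?thesis unfolding gamma_min_def gamma_set by simp
qed


lemma forward:
  fixes w z :: "nat \<Rightarrow> real^'n"
  assumes k2: "2 \<le> k"
    and labels: "\<forall>i<N. y i \<in> {1..k}"
    and allclasses: "\<forall>c\<in>{1..k}. \<exists>i<N. y i = c"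
    and adm: "admissible k N w z"
    and g: "gamma_min k N y w z = real k / (real k - 1)"
  shows "(\<forall>i\<in>{1..k}. \<forall>j\<in>{1..k}. i \<noteq> j \<longrightarrow> w i \<bullet> w j = - 1 / (real k - 1))
         \<and> (\<forall>i<N. z i = w (y i))"
proof -
  have wn: "\<forall>j\<in>{1..k}. norm (w j) = 1" and zn: "\<forall>i<N. norm (z i) = 1"
    using adm by (auto simp: admissible_def)
  have k1: "real k - 1 > 0" using k2 by simp
  have S0: "(\<Sum>j\<in>{1..k}. w j) = 0" using key[OF k2 allclasses adm] g by simp
  have sample: "z i = w (y i) \<and> (\<forall>j\<in>{1..k}. j \<noteq> y i \<longrightarrow> w j \<bullet> w (y i) = - 1 / (real k - 1))"
    if i: "i < N" for i
  proof -
    let ?c = "y i"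
    have c: "?c \<in> {1..k}" using labels i by blast
    let ?m = "sample_margin k w ?c (z i)"
    have gm: "real k / (real k - 1) \<le> ?m" using gamma_le[OF i, of k y w z] g by simp
    have mb: "(real k - 1) * ?m \<le> real k * (w ?c \<bullet> z i)"
      using margin_bound[OF k2 c, of w "z i"] S0 by simp
    have cs: "w ?c \<bullet> z i \<le> 1" using norm_cauchy_schwarz[of "w ?c" "z i"] wn zn c i by simp
    have "real k \<le> (real k - 1) * ?m" using gm k1 by (simp add: field_simps)
    then have "real k * 1 \<le> real k * (w ?c \<bullet> z i)" using mb by linarith
    then have wz: "w ?c \<bullet> z i \<ge> 1" using k2 by (simp add: mult_le_cancel_left_pos)
    have zeq: "z i = w ?c" using unit_eq[of "z i" "w ?c"] wn zn c i wz by (simp add: inner_commute)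
    have mk: "(real k - 1) * ?m = real k" using mb cs wz \<open>real k \<le> (real k - 1) * ?m\<close> by simp
    let ?A = "{1..k} - {?c}"
    let ?M = "Max ((\<lambda>j. w j \<bullet> w ?c) ` ?A)"
    have "?m = 1 - ?M" unfolding sample_margin_def margin_set zeq using wn c by (simp add: norm_eq_1)
    then have "?M = 1 - ?m" by simp
    then have "(real k - 1) * ?M = (real k - 1) - (real k - 1) * ?m" by (simp add: right_diff_distrib)
    then have "(real k - 1) * ?M = -1" using mk by simp
    then have M: "?M = - 1 / (real k - 1)" using k1 by (simp add: field_simps)
    have each: "\<forall>j\<in>?A. w j \<bullet> w ?c \<le> ?M" by simp
    have card: "card ?A = k - 1" using c by (simp add: card_Diff_singleton)
    have split: "(\<Sum>j\<in>{1..k}. w j) \<bullet> w ?c = w ?c \<bullet> w ?c + (\<Sum>j\<in>?A. w j \<bullet> w ?c)"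
      using c by (simp add: inner_sum_left sum.remove inner_add_left)
    then have sumA: "(\<Sum>j\<in>?A. w j \<bullet> w ?c) = -1" using S0 wn c by (simp add: norm_eq_1)
    have "(\<Sum>j\<in>?A. ?M - w j \<bullet> w ?c) = (real k - 1) * ?M + 1"
      using sumA card k2 by (simp add: sum_subtractf of_nat_diff)
    also have "\<dots> = 0" using M k1 by simp
    finally have fz: "(\<Sum>j\<in>?A. ?M - w j \<bullet> w ?c) = 0" .
    have nn: "\<forall>j\<in>?A. 0 \<le> ?M - w j \<bullet> w ?c" using each by simp
    have "\<forall>j\<in>?A. ?M - w j \<bullet> w ?c = 0"
      using sum_nonneg_eq_0_iff[of ?A "\<lambda>j. ?M - w j \<bullet> w ?c"] nn fz by blast
    then show ?thesis using zeq M by auto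
  qed
  show ?thesis
  proof (intro conjI ballI impI allI)
    fix i j assume i: "i \<in> {1..k}" and j: "j \<in> {1..k}" and ij: "i \<noteq> j"
    obtain s where s: "s < N" "y s = i" using allclasses i by blast
    show "w i \<bullet> w j = - 1 / (real k - 1)" using sample[OF s(1)] s j ij by (auto simp: inner_commute)
  next
    fix i assume "i < N" then show "z i = w (y i)" using sample by blast
  qed
qed



lemma simplex_exists:
  assumes k2: "2 \<le> k" and kd: "k \<le> CARD('n::finite) + 1"
  shows "\<exists>w :: nat \<Rightarrow> real^'n. (\<forall>j\<in>{1..k}. norm (w j) = 1) \<and>
           (\<forall>i\<in>{1..k}. \<forall>j\<in>{1..k}. i \<noteq> j \<longrightarrow> w i \<bullet> w j = -1 / (real k - 1))"
proof -
  define m where "m = k - 1"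
  have mk: "real m = real k - 1" and m1: "m \<ge> 1" using k2 by (auto simp: m_def)
  have "card {1..m} \<le> card (UNIV :: 'n set)" using kd by (simp add: m_def)
  then obtain g :: "nat \<Rightarrow> 'n" where g: "inj_on g {1..m}"
    using card_le_inj[of "{1..m}" "UNIV :: 'n set"] by auto
  define e where "e c = (axis (g c) 1 :: real^'n)" for c
  define P where "P = (\<Sum>j\<in>{1..m}. e j)"
  have ee: "e i \<bullet> e j = (if i = j then 1 else 0)" if "i \<in> {1..m}" "j \<in> {1..m}" for i j
    using g that unfolding e_def by (auto simp: inner_axis_axis inj_on_eq_iff)
  have eP: "e i \<bullet> P = 1" if i: "i \<in> {1..m}" for i
  proof -
    have "e i \<bullet> P = (\<Sum>j\<in>{1..m}. e i \<bullet> e j)" unfolding P_def by (simp add: inner_sum_right)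
    also have "\<dots> = (\<Sum>j\<in>{1..m}. if j = i then 1 else 0)"
      using ee i by (intro sum.cong) auto
    also have "\<dots> = 1" using i by simp
    finally show ?thesis .
  qed
  have PP: "P \<bullet> P = real m"
  proof -
    have "P \<bullet> P = (\<Sum>j\<in>{1..m}. e j \<bullet> P)" unfolding P_def[of] by (simp add: inner_sum_left P_def[symmetric])
    also have "\<dots> = (\<Sum>j\<in>{1..m}. 1)" using eP by (intro sum.cong) auto
    finally show ?thesis by simp
  qed
  define s where "s = sqrt (real k)"
  have s2: "s * s = real k" and spos: "s > 0" using k2 by (auto simp: s_def)
  define \<alpha> where "\<alpha> = (1 - 1 / s) / real m"
  have ma: "real m * \<alpha> = 1 - 1 / s" using m1 by (simp add: \<alpha>_def)
  define r where "r = sqrt (real k / real m)"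
  have r2: "r * r = real k / real m" using k2 by (simp add: r_def)
  define u where "u c = (if c = k then (- 1 / s) *\<^sub>R P else e c - \<alpha> *\<^sub>R P)" for c
  define w where "w c = r *\<^sub>R u c" for c
  have kk: "k = m + 1" using k2 by (simp add: m_def)
  have uu: "u i \<bullet> u j = (if i = j then real m / real k else - 1 / real k)"
    if i: "i \<in> {1..k}" and j: "j \<in> {1..k}" for i j
  proof (cases "i = k")
    case True
    note iT = True
    show ?thesis
    proof (cases "j = k")
      case True
      then show ?thesis using iT PP s2 spos by (simp add: u_def field_simps)
    next
      case False
      then have jm: "j \<in> {1..m}" using j kk by auto
      have "u i \<bullet> u j = (- 1 / s) * (P \<bullet> e j - \<alpha> * (P \<bullet> P))"
        using iT False by (simp add: u_def inner_diff_right algebra_simps diff_divide_distrib)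
      also have "\<dots> = (- 1 / s) * (1 - real m * \<alpha>)" using eP[OF jm] PP by (simp add: inner_commute)
      also have "\<dots> = (- 1 / s) * (1 / s)" using ma by simp
      also have "\<dots> = - 1 / real k" using s2[symmetric] by simp
      finally show ?thesis using iT False by simp
    qed
  next
    case False
    note iF = False
    then have im: "i \<in> {1..m}" using i kk by auto
    show ?thesis
    proof (cases "j = k")
      case True
      have "u i \<bullet> u j = (- 1 / s) * (e i \<bullet> P - \<alpha> * (P \<bullet> P))"
        using iF True by (simp add: u_def inner_diff_left algebra_simps diff_divide_distrib)
      also have "\<dots> = (- 1 / s) * (1 - real m * \<alpha>)" using eP[OF im] PP by (simp add: inner_commute)
      also have "\<dots> = (- 1 / s) * (1 / s)" using ma by simp
      also have "\<dots> = - 1 / real k" using s2[symmetric] by simp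
      finally show ?thesis using iF True by simp
    next
      case False
      then have jm: "j \<in> {1..m}" using j kk by auto
      have "u i \<bullet> u j = e i \<bullet> e j - \<alpha> * (e i \<bullet> P) - \<alpha> * (P \<bullet> e j) + \<alpha> * \<alpha> * (P \<bullet> P)"
        using iF False by (simp add: u_def inner_diff_left inner_diff_right algebra_simps)
      also have "\<dots> = e i \<bullet> e j + (- 2 * \<alpha> + \<alpha> * (real m * \<alpha>))"
        using eP[OF im] eP[OF jm] PP by (simp add: inner_commute)
      finally have U: "u i \<bullet> u j = e i \<bullet> e j + (- 2 * \<alpha> + \<alpha> * (real m * \<alpha>))" .
      have X: "- 2 * \<alpha> + \<alpha> * (real m * \<alpha>) = - 1 / real k"
      proof -
        have "- 2 * \<alpha> + \<alpha> * (real m * \<alpha>) = - \<alpha> * (1 + 1 / s)" unfolding ma by (simp add: algebra_simps)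
        also have "\<dots> = - ((1 - 1 / s) * (1 + 1 / s)) / real m" by (simp add: \<alpha>_def)
        also have "(1 - 1 / s) * (1 + 1 / s) = (real k - 1) / real k"
          using s2 spos by (simp add: field_simps)
        also have "- ((real k - 1) / real k) / real m = - 1 / real k"
          unfolding mk[symmetric] using m1 by simp
        finally show ?thesis .
      qed
      show ?thesis unfolding U X using ee[OF im jm] mk k2 by (auto simp: field_simps)
    qed
  qed
  have ww: "w i \<bullet> w j = (if i = j then 1 else - 1 / (real k - 1))"
    if "i \<in> {1..k}" "j \<in> {1..k}" for i j
  proof -
    have "w i \<bullet> w j = (r * r) * (u i \<bullet> u j)" by (simp add: w_def)
    also have "\<dots> = (if i = j then 1 else - 1 / (real k - 1))"
      unfolding uu[OF that] r2 mk[symmetric] using m1 k2 by (cases "i = j") simp_all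
    finally show ?thesis .
  qed
  show ?thesis
  proof (intro exI[of _ w] conjI ballI impI)
    fix j assume "j \<in> {1..k}"
    then show "norm (w j) = 1" using ww[of j j] by (simp add: norm_eq_1)
  next
    fix i j assume "i \<in> {1..k}" "j \<in> {1..k}" "i \<noteq> j"
    then show "w i \<bullet> w j = - 1 / (real k - 1)" using ww by simp
  qed
qed


theorem proposition1:
  fixes k N :: nat and y :: "nat \<Rightarrow> nat"
  assumes d2: "CARD('n::finite) \<ge> 2"
    and k2: "2 \<le> k" and kd: "k \<le> CARD('n) + 1"
    and labels: "\<forall>i<N. y i \<in> {1..k}"
    and allclasses: "\<forall>c\<in>{1..k}. \<exists>i<N. y i = c"
  shows "(\<forall>(w :: nat \<Rightarrow> real ^ 'n) z. admissible k N w z \<longrightarrow>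
             gamma_min k N y w z \<le> real k / (real k - 1))
       \<and> (\<exists>(w :: nat \<Rightarrow> real ^ 'n) z. admissible k N w z \<and>
             gamma_min k N y w z = real k / (real k - 1))
       \<and> (\<forall>(w :: nat \<Rightarrow> real ^ 'n) z. admissible k N w z \<longrightarrow>
             (gamma_min k N y w z = real k / (real k - 1) \<longleftrightarrow>
               (\<forall>i\<in>{1..k}. \<forall>j\<in>{1..k}. i \<noteq> j \<longrightarrow> w i \<bullet> w j = - 1 / (real k - 1))
               \<and> (\<forall>i<N. z i = w (y i))))"
proof (intro conjI allI impI)
  have N0: "0 < N" using allclasses k2 by fastforce
  fix w z :: "nat \<Rightarrow> real^'n"
  assume adm: "admissible k N w z"
  then show "gamma_min k N y w z \<le> real k / (real k - 1)" using key[OF k2 allclasses] by blast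
  show "gamma_min k N y w z = real k / (real k - 1) \<longleftrightarrow>
               (\<forall>i\<in>{1..k}. \<forall>j\<in>{1..k}. i \<noteq> j \<longrightarrow> w i \<bullet> w j = - 1 / (real k - 1))
               \<and> (\<forall>i<N. z i = w (y i))"
    using forward[OF k2 labels allclasses adm] backward[OF k2 N0 labels adm] by blast
next
  have N0: "0 < N" using allclasses k2 by fastforce
  obtain w :: "nat \<Rightarrow> real^'n" where wn: "\<forall>j\<in>{1..k}. norm (w j) = 1"
    and ws: "\<forall>i\<in>{1..k}. \<forall>j\<in>{1..k}. i \<noteq> j \<longrightarrow> w i \<bullet> w j = -1 / (real k - 1)"
    using simplex_exists[OF k2 kd] by blast
  define z where "z i = w (y i)" for i
  have adm: "admissible k N w z" using wn labels unfolding admissible_def z_def by auto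
  show "\<exists>(w :: nat \<Rightarrow> real ^ 'n) z. admissible k N w z \<and>
             gamma_min k N y w z = real k / (real k - 1)"
    using adm backward[OF k2 N0 labels adm ws] z_def by blast
qed

end
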